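(* Let $(H,\partial)$ be a Cartan–Eilenberg system with associated spectral sequence $(E^r,d^r)_{r\ge1}$. Suppose there are integers $a$ and $b$ such that $d^r_s\colon E^r_s\to E^r_{s-r}$ is zero whenever $s-r\le a$ and $s>b$. Then $\ker(\kappa)=0$, where $\kappa\colon\operatorname{colim}_j\lim_iH(i,j)\to\lim_i\operatorname{colim}_jH(i,j)$ is the interchange morphism.
   Context: Let $\mathcal{A}$ be the abelian category of $\mathbb{Z}$-graded modules over a ring $R$. A Cartan–Eilenberg system $(H,\partial)$ consists of objects $H(i,j)\in\mathcal{A}$ for integers $i\le j$, functorial morphisms $\eta\colon H(i,j)\to H(i',j')$ of internal degree $0$ for $i\le i'$, $j\le j'$, and natural morphisms $\partial\colon H(j,k)\to H(i,j)$ of internal degree $-1$ for $i\le j\le k$ (commuting with $\eta$), such that $H(i,j)\xrightarrow{\eta}H(i,k)\xrightarrow{\eta}H(j,k)\xrightarrow{\partial}H(i,j)$ is exact at each vertex. Its spectral sequence: $E^1_s=H(s-1,s)$; for $r\ge1$, $Z^r_s=\ker(\partial\colon E^1_s\to H(s-r,s-1))$, $B^r_s=\operatorname{im}(\partial\colon H(s,s+r-1)\to E^1_s)$, $E^r_s=Z^r_s/B^r_s$, and $d^r_s\colon E^r_s\to E^r_{s-r}$ is $[x]\mapsto[\partial(\tilde x)]$, where $x\in Z^r_s$, $\tilde x\in H(s-r,s)$ with $\eta(\tilde x)=x$, and $\partial\colon H(s-r,s)\to H(s-r-1,s-r)=E^1_{s-r}$. Limits over $i$ are along $\eta\colon H(i-1,j)\to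 H(i,j)$ as $i\to-\infty$, colimits over $j$ along $\eta\colon H(i,j)\to H(i,j+1)$. The interchange morphism $\kappa$ is the canonical morphism whose restriction to $\lim_iH(i,j)$ followed by projection to $\operatorname{colim}_jH(i,j)$ is $\lim_iH(i,j)\to H(i,j)\to\operatorname{colim}_jH(i,j)$. *)

theory Defs
  imports Main
begin

text \<open>A Z-graded R-module M is modelled as a family of submodules M n (n the internal
degree) of an ambient left R-module 'a (scalar action sc). A morphism of internal degree d
is a family of R-linear maps f n : M n -> N (n + d).\<close>

definition is_lmodule :: "('r::ring_1 \<Rightarrow> 'a::ab_group_add \<Rightarrow> 'a) \<Rightarrow> bool" where
  "is_lmodule sc \<equiv>
     (\<forall>c x y. sc c (x + y) = sc c x + sc c y) \<and>
     (\<forall>c d x. sc (c + d) x = sc c x + sc d x) \<and>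
     (\<forall>c d x. sc (c * d) x = sc c (sc d x)) \<and>
     (\<forall>x. sc 1 x = x)"

definition submodule :: "('r::ring_1 \<Rightarrow> 'a::ab_group_add \<Rightarrow> 'a) \<Rightarrow> 'a set \<Rightarrow> bool" where
  "submodule sc M \<equiv> 0 \<in> M \<and> (\<forall>x\<in>M. \<forall>y\<in>M. x + y \<in> M) \<and> (\<forall>x\<in>M. - x \<in> M)
     \<and> (\<forall>c. \<forall>x\<in>M. sc c x \<in> M)"

definition linmap :: "('r::ring_1 \<Rightarrow> 'a::ab_group_add \<Rightarrow> 'a) \<Rightarrow> 'a set \<Rightarrow> 'a set \<Rightarrow> ('a \<Rightarrow> 'a) \<Rightarrow> bool" where
  "linmap sc M N f \<equiv> (\<forall>x\<in>M. f x \<in> N) \<and> (\<forall>x\<in>M. \<forall>y\<in>M. f (x + y) = f x + f y)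
     \<and> (\<forall>c. \<forall>x\<in>M. f (sc c x) = sc c (f x))"

definition exact_at :: "'a set \<Rightarrow> 'a set \<Rightarrow> 'a set \<Rightarrow> ('a \<Rightarrow> 'a) \<Rightarrow> ('a \<Rightarrow> 'a::zero) \<Rightarrow> bool" where
  "exact_at A B C f g \<equiv> {y \<in> B. g y = 0} = f ` A"

text \<open>H i j n = degree-n part of H(i,j);
  eta i j i' j' n : H(i,j)_n -> H(i',j')_n  (internal degree 0);
  del i j k n : H(j,k)_n -> H(i,j)_(n-1)   (internal degree -1).\<close>

definition CE_system ::
  "('r::ring_1 \<Rightarrow> 'a::ab_group_add \<Rightarrow> 'a) \<Rightarrow> (int \<Rightarrow> int \<Rightarrow> int \<Rightarrow> 'a set)
   \<Rightarrow> (int \<Rightarrow> int \<Rightarrow> int \<Rightarrow> int \<Rightarrow> int \<Rightarrow> 'a \<Rightarrow> 'a) \<Rightarrow> (int \<Rightarrow> int \<Rightarrow> int \<Rightarrow> int \<Rightarrow> 'a \<Rightarrow> 'a) \<Rightarrow> bool"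
where
  "CE_system sc H eta del \<equiv>
     is_lmodule sc \<and>
     (\<forall>i j n. i \<le> j \<longrightarrow> submodule sc (H i j n)) \<and>
     (\<forall>i j i' j' n. i \<le> j \<and> i \<le> i' \<and> j \<le> j' \<and> i' \<le> j' \<longrightarrow>
        linmap sc (H i j n) (H i' j' n) (eta i j i' j' n)) \<and>
     (\<forall>i j n. i \<le> j \<longrightarrow> (\<forall>x\<in>H i j n. eta i j i j n x = x)) \<and>
     (\<forall>i j i' j' i'' j'' n. i \<le> j \<and> i \<le> i' \<and> j \<le> j' \<and> i' \<le> j' \<and> i' \<le> i'' \<and> j' \<le> j'' \<and> i'' \<le> j'' \<longrightarrow>
        (\<forall>x\<in>H i j n. eta i' j' i'' j'' n (eta i j i' j' n x) = eta i j i'' j'' n x)) \<and>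
     (\<forall>i j k n. i \<le> j \<and> j \<le> k \<longrightarrow> linmap sc (H j k n) (H i j (n - 1)) (del i j k n)) \<and>
     (\<forall>i j k i' j' k' n. i \<le> j \<and> j \<le> k \<and> i' \<le> j' \<and> j' \<le> k' \<and> i \<le> i' \<and> j \<le> j' \<and> k \<le> k' \<longrightarrow>
        (\<forall>x\<in>H j k n. eta i j i' j' (n - 1) (del i j k n x) = del i' j' k' n (eta j k j' k' n x))) \<and>
     (\<forall>i j k n. i \<le> j \<and> j \<le> k \<longrightarrow>
        exact_at (H i j n) (H i k n) (H j k n) (eta i j i k n) (eta i k j k n) \<and>
        exact_at (H i k n) (H j k n) (H i j (n - 1)) (eta i k j k n) (del i j k n) \<and>
        exact_at (H j k (n + 1)) (H i j n) (H i k n) (del i j k (n + 1)) (eta i j i k n))"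

definition Zr :: "(int \<Rightarrow> int \<Rightarrow> int \<Rightarrow> 'a::ab_group_add set) \<Rightarrow> (int \<Rightarrow> int \<Rightarrow> int \<Rightarrow> int \<Rightarrow> 'a \<Rightarrow> 'a)
    \<Rightarrow> int \<Rightarrow> int \<Rightarrow> int \<Rightarrow> 'a set" where
  "Zr H del r s n = {x \<in> H (s - 1) s n. del (s - r) (s - 1) s n x = 0}"

definition Br :: "(int \<Rightarrow> int \<Rightarrow> int \<Rightarrow> 'a::ab_group_add set) \<Rightarrow> (int \<Rightarrow> int \<Rightarrow> int \<Rightarrow> int \<Rightarrow> 'a \<Rightarrow> 'a)
    \<Rightarrow> int \<Rightarrow> int \<Rightarrow> int \<Rightarrow> 'a set" where
  "Br H del r s n = del (s - 1) s (s + r - 1) (n + 1) ` H s (s + r - 1) (n + 1)"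

definition coset_of :: "'a::ab_group_add set \<Rightarrow> 'a \<Rightarrow> 'a set" where
  "coset_of B x = (\<lambda>b. x + b) ` B"

text \<open>E^r_s in internal degree n, as the set of cosets Z/B; the zero element is the coset B.\<close>
definition Er where
  "Er H del r s n = coset_of (Br H del r s n) ` Zr H del r s n"

text \<open>d^r_s : E^r_s (degree n) -> E^r_(s-r) (degree n-1), [x] |-> [del(x~)], x~ a lift of x.\<close>
definition dr where
  "dr H eta del r s n X =
     coset_of (Br H del r (s - r) (n - 1))
       (del (s - r - 1) (s - r) s n
         (SOME y. y \<in> H (s - r) s n \<and>
                  eta (s - r) s (s - 1) s n y = (SOME x. x \<in> X \<and> x \<in> Zr H del r s n)))"

text \<open>lim_i H(i,j) in degree n: compatible families (x_i)_(i<=j) along eta : H(i-1,j) -> H(i,j)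
  (entries for i > j are set to 0).\<close>
definition limH where
  "limH H eta j n = {x :: int \<Rightarrow> 'a::ab_group_add.
      (\<forall>i\<le>j. x i \<in> H i j n \<and> x i = eta (i - 1) j i j n (x (i - 1))) \<and> (\<forall>i>j. x i = 0)}"

text \<open>Induced map lim_i H(i,j) -> lim_i H(i,k) for j <= k.\<close>
definition limeta where
  "limeta eta j k n x = (\<lambda>i. if i \<le> k then eta (min i j) j i k n (x (min i j)) else 0)"

text \<open>Directed colimit of a system M_j (j in an up-closed index set J) with transition maps
  f j k : M_j -> M_k: equivalence classes of pairs (j, x).\<close>
definition colim_carrier :: "int set \<Rightarrow> (int \<Rightarrow> 'b set) \<Rightarrow> (int \<times> 'b) set" where
  "colim_carrier J M = {p. fst p \<in> J \<and> snd p \<in> M (fst p)}"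

definition colim_class :: "int set \<Rightarrow> (int \<Rightarrow> 'b set) \<Rightarrow> (int \<Rightarrow> int \<Rightarrow> 'b \<Rightarrow> 'b) \<Rightarrow> int \<times> 'b \<Rightarrow> (int \<times> 'b) set" where
  "colim_class J M f p = {q \<in> colim_carrier J M.
      \<exists>k\<in>J. fst p \<le> k \<and> fst q \<le> k \<and> f (fst p) k (snd p) = f (fst q) k (snd q)}"

definition colim :: "int set \<Rightarrow> (int \<Rightarrow> 'b set) \<Rightarrow> (int \<Rightarrow> int \<Rightarrow> 'b \<Rightarrow> 'b) \<Rightarrow> (int \<times> 'b) set set" where
  "colim J M f = colim_class J M f ` colim_carrier J M"

definition colimLim where
  "colimLim H eta n = colim UNIV (\<lambda>j. limH H eta j n) (\<lambda>j k. limeta eta j k n)"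

definition colimH_class where
  "colimH_class H eta i n p = colim_class {i..} (\<lambda>j. H i j n) (\<lambda>j k. eta i j i k n) p"

text \<open>The interchange morphism kappa : colim_j lim_i H(i,j) -> lim_i colim_j H(i,j):
  the class of (j, x) goes to the family whose i-th entry (i <= j) is the class of (j, x_i);
  for i > j the entry is the image of x_j under H(j,j) -> H(i,i), as forced by compatibility.\<close>
definition kappa where
  "kappa H eta n C = (\<lambda>i. let p = (SOME p. p \<in> C); j = fst p; x = snd p in
      colimH_class H eta i n (max i j, eta (min i j) j i (max i j) n (x (min i j))))"

definition zero_source where
  "zero_source H eta n = colim_class UNIV (\<lambda>j. limH H eta j n) (\<lambda>j k. limeta eta j k n) (0, \<lambda>_. 0)"

definition zero_target where
  "zero_target H eta n = (\<lambda>i. colimH_class H eta i n (i, 0))"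

definition ker_kappa where
  "ker_kappa H eta n = {C \<in> colimLim H eta n. kappa H eta n C = zero_target H eta n}"

end

theory Submission
  imports Defs
begin

lemma ce_conj1:
  assumes "CE_system sc H eta del"
  shows "(\<forall>i j n. i \<le> j \<longrightarrow> submodule sc (H i j n))"
  using assms unfolding CE_system_def by (elim conjE) assumption

lemma ce_conj2:
  assumes "CE_system sc H eta del"
  shows "(\<forall>i j i' j' n. i \<le> j \<and> i \<le> i' \<and> j \<le> j' \<and> i' \<le> j' \<longrightarrow>
        linmap sc (H i j n) (H i' j' n) (eta i j i' j' n))"
  using assms unfolding CE_system_def by (elim conjE) assumption

lemma ce_conj3:
  assumes "CE_system sc H eta del"
  shows "(\<forall>i j n. i \<le> j \<longrightarrow> (\<forall>x\<in>H i j n. eta i j i j n x = x))"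
  using assms unfolding CE_system_def by (elim conjE) assumption

lemma ce_conj4:
  assumes "CE_system sc H eta del"
  shows "(\<forall>i j i' j' i'' j'' n. i \<le> j \<and> i \<le> i' \<and> j \<le> j' \<and> i' \<le> j' \<and> i' \<le> i'' \<and> j' \<le> j'' \<and> i'' \<le> j'' \<longrightarrow>
        (\<forall>x\<in>H i j n. eta i' j' i'' j'' n (eta i j i' j' n x) = eta i j i'' j'' n x))"
  using assms unfolding CE_system_def by (elim conjE) assumption

lemma ce_conj5:
  assumes "CE_system sc H eta del"
  shows "(\<forall>i j k n. i \<le> j \<and> j \<le> k \<longrightarrow> linmap sc (H j k n) (H i j (n - 1)) (del i j k n))"
  using assms unfolding CE_system_def by (elim conjE) assumption

lemma ce_conj6:
  assumes "CE_system sc H eta del"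
  shows "(\<forall>i j k i' j' k' n. i \<le> j \<and> j \<le> k \<and> i' \<le> j' \<and> j' \<le> k' \<and> i \<le> i' \<and> j \<le> j' \<and> k \<le> k' \<longrightarrow>
        (\<forall>x\<in>H j k n. eta i j i' j' (n - 1) (del i j k n x) = del i' j' k' n (eta j k j' k' n x)))"
  using assms unfolding CE_system_def by (elim conjE) assumption

lemma ce_conj7:
  assumes "CE_system sc H eta del"
  shows "(\<forall>i j k n. i \<le> j \<and> j \<le> k \<longrightarrow>
        exact_at (H i j n) (H i k n) (H j k n) (eta i j i k n) (eta i k j k n) \<and>
        exact_at (H i k n) (H j k n) (H i j (n - 1)) (eta i k j k n) (del i j k n) \<and>
        exact_at (H j k (n + 1)) (H i j n) (H i k n) (del i j k (n + 1)) (eta i j i k n))"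
  using assms unfolding CE_system_def by (elim conjE) assumption

lemma ce_sub: "CE_system sc H eta del \<Longrightarrow> i \<le> j \<Longrightarrow> submodule sc (H i j n)"
  by (rule ce_conj1[rule_format]) (assumption | (intro conjI; assumption))+

lemma ce_eta_lin: "CE_system sc H eta del \<Longrightarrow> i \<le> j \<Longrightarrow> i \<le> i' \<Longrightarrow> j \<le> j' \<Longrightarrow> i' \<le> j'
   \<Longrightarrow> linmap sc (H i j n) (H i' j' n) (eta i j i' j' n)"
  by (rule ce_conj2[rule_format]) (assumption | (intro conjI; assumption))+

lemma ce_eta_id: "CE_system sc H eta del \<Longrightarrow> i \<le> j \<Longrightarrow> x \<in> H i j n \<Longrightarrow> eta i j i j n x = x"
  by (rule ce_conj3[rule_format]) (assumption | (intro conjI; assumption))+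

lemma ce_eta_comp: "CE_system sc H eta del \<Longrightarrow> i \<le> j \<Longrightarrow> i \<le> i' \<Longrightarrow> j \<le> j' \<Longrightarrow> i' \<le> j'
   \<Longrightarrow> i' \<le> i'' \<Longrightarrow> j' \<le> j'' \<Longrightarrow> i'' \<le> j'' \<Longrightarrow> x \<in> H i j n
   \<Longrightarrow> eta i' j' i'' j'' n (eta i j i' j' n x) = eta i j i'' j'' n x"
  by (rule ce_conj4[rule_format]) (assumption | (intro conjI; assumption))+

lemma ce_del_lin: "CE_system sc H eta del \<Longrightarrow> i \<le> j \<Longrightarrow> j \<le> k
   \<Longrightarrow> linmap sc (H j k n) (H i j (n - 1)) (del i j k n)"
  by (rule ce_conj5[rule_format]) (assumption | (intro conjI; assumption))+

lemma ce_nat: "CE_system sc H eta del \<Longrightarrow> i \<le> j \<Longrightarrow> j \<le> k \<Longrightarrow> i' \<le> j' \<Longrightarrow> j' \<le> k'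
   \<Longrightarrow> i \<le> i' \<Longrightarrow> j \<le> j' \<Longrightarrow> k \<le> k' \<Longrightarrow> x \<in> H j k n
   \<Longrightarrow> eta i j i' j' (n - 1) (del i j k n x) = del i' j' k' n (eta j k j' k' n x)"
  by (rule ce_conj6[rule_format]) (assumption | (intro conjI; assumption))+

lemma ce_ex: "CE_system sc H eta del \<Longrightarrow> i \<le> j \<Longrightarrow> j \<le> k \<Longrightarrow>
        exact_at (H i j n) (H i k n) (H j k n) (eta i j i k n) (eta i k j k n) \<and>
        exact_at (H i k n) (H j k n) (H i j (n - 1)) (eta i k j k n) (del i j k n) \<and>
        exact_at (H j k (n + 1)) (H i j n) (H i k n) (del i j k (n + 1)) (eta i j i k n)"
  by (rule ce_conj7[rule_format]) (assumption | (intro conjI; assumption))+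

lemma ex1a: "CE_system sc H eta del \<Longrightarrow> i \<le> j \<Longrightarrow> j \<le> k \<Longrightarrow> y \<in> H i k n \<Longrightarrow> eta i k j k n y = 0
  \<Longrightarrow> \<exists>x\<in>H i j n. y = eta i j i k n x"
  using ce_ex[of sc H eta del i j k n] unfolding exact_at_def by blast

lemma ex2a: "CE_system sc H eta del \<Longrightarrow> i \<le> j \<Longrightarrow> j \<le> k \<Longrightarrow> y \<in> H j k n \<Longrightarrow> del i j k n y = 0
  \<Longrightarrow> \<exists>x\<in>H i k n. y = eta i k j k n x"
  using ce_ex[of sc H eta del i j k n] unfolding exact_at_def by blast

lemma ex2b: "CE_system sc H eta del \<Longrightarrow> i \<le> j \<Longrightarrow> j \<le> k \<Longrightarrow> x \<in> H i k n
  \<Longrightarrow> del i j k n (eta i k j k n x) = 0"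
  using ce_ex[of sc H eta del i j k n] unfolding exact_at_def by blast

lemma ex3a: "CE_system sc H eta del \<Longrightarrow> i \<le> j \<Longrightarrow> j \<le> k \<Longrightarrow> y \<in> H i j n \<Longrightarrow> eta i j i k n y = 0
  \<Longrightarrow> \<exists>x\<in>H j k (n + 1). y = del i j k (n + 1) x"
  using ce_ex[of sc H eta del i j k n] unfolding exact_at_def by blast

lemma ex3b: "CE_system sc H eta del \<Longrightarrow> i \<le> j \<Longrightarrow> j \<le> k \<Longrightarrow> x \<in> H j k (n + 1)
  \<Longrightarrow> eta i j i k n (del i j k (n + 1) x) = 0"
  using ce_ex[of sc H eta del i j k n] unfolding exact_at_def by blast

lemma sub_0: "submodule sc M \<Longrightarrow> 0 \<in> M" unfolding submodule_def by blast

lemma sub_diff: "submodule sc M \<Longrightarrow> x \<in> M \<Longrightarrow> y \<in> M \<Longrightarrow> x - y \<in> M"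
  unfolding submodule_def by (metis diff_conv_add_uminus)

lemma lin_mem: "linmap sc M N f \<Longrightarrow> x \<in> M \<Longrightarrow> f x \<in> N" unfolding linmap_def by blast

lemma lin_0: "submodule sc M \<Longrightarrow> linmap sc M N f \<Longrightarrow> f 0 = 0"
proof -
  assume s: "submodule sc M" and l: "linmap sc M N f"
  have "0 \<in> M" using s by (rule sub_0)
  then have "f (0 + 0) = f 0 + f 0" using l unfolding linmap_def by blast
  then show "f 0 = 0" by simp
qed

lemma lin_diff: "submodule sc M \<Longrightarrow> linmap sc M N f \<Longrightarrow> x \<in> M \<Longrightarrow> y \<in> M \<Longrightarrow> f (x - y) = f x - f y"
proof -
  assume s: "submodule sc M" and l: "linmap sc M N f" and x: "x \<in> M" and y: "y \<in> M"
  have "x - y \<in> M" using s x y by (rule sub_diff)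
  then have "f ((x - y) + y) = f (x - y) + f y" using l y unfolding linmap_def by blast
  then show ?thesis by (simp add: algebra_simps)
qed

lemma zero_in: "CE_system sc H eta del \<Longrightarrow> i \<le> j \<Longrightarrow> 0 \<in> H i j n"
  by (rule sub_0, rule ce_sub)

lemma eta_mem: "CE_system sc H eta del \<Longrightarrow> i \<le> j \<Longrightarrow> i \<le> i' \<Longrightarrow> j \<le> j' \<Longrightarrow> i' \<le> j'
   \<Longrightarrow> x \<in> H i j n \<Longrightarrow> eta i j i' j' n x \<in> H i' j' n"
  by (rule lin_mem, rule ce_eta_lin)

lemma eta_0: "CE_system sc H eta del \<Longrightarrow> i \<le> j \<Longrightarrow> i \<le> i' \<Longrightarrow> j \<le> j' \<Longrightarrow> i' \<le> j'
   \<Longrightarrow> eta i j i' j' n 0 = 0"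
  by (rule lin_0, rule ce_sub, assumption, assumption, rule ce_eta_lin)

lemma eta_diff: "CE_system sc H eta del \<Longrightarrow> i \<le> j \<Longrightarrow> i \<le> i' \<Longrightarrow> j \<le> j' \<Longrightarrow> i' \<le> j'
   \<Longrightarrow> x \<in> H i j n \<Longrightarrow> y \<in> H i j n \<Longrightarrow> eta i j i' j' n (x - y) = eta i j i' j' n x - eta i j i' j' n y"
  by (rule lin_diff, rule ce_sub, assumption, assumption, rule ce_eta_lin)

lemma del_mem: "CE_system sc H eta del \<Longrightarrow> i \<le> j \<Longrightarrow> j \<le> k \<Longrightarrow> x \<in> H j k n
   \<Longrightarrow> del i j k n x \<in> H i j (n - 1)"
  by (rule lin_mem, rule ce_del_lin)

lemma del_0: "CE_system sc H eta del \<Longrightarrow> i \<le> j \<Longrightarrow> j \<le> k \<Longrightarrow> del i j k n 0 = 0"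
  by (rule lin_0, rule ce_sub, assumption, assumption, rule ce_del_lin)

lemma del_diff: "CE_system sc H eta del \<Longrightarrow> i \<le> j \<Longrightarrow> j \<le> k \<Longrightarrow> x \<in> H j k n \<Longrightarrow> y \<in> H j k n
   \<Longrightarrow> del i j k n (x - y) = del i j k n x - del i j k n y"
  by (rule lin_diff, rule ce_sub, assumption, assumption, rule ce_del_lin)

lemma H_diag: "CE_system sc H eta del \<Longrightarrow> x \<in> H i i n \<Longrightarrow> x = 0"
proof -
  assume ce: "CE_system sc H eta del" and x: "x \<in> H i i n"
  have e: "exact_at (H i i n) (H i i n) (H i i n) (eta i i i i n) (eta i i i i n)"
    using ce_ex[OF ce, of i i i n] by simp
  have "x = eta i i i i n x" using ce_eta_id[OF ce _ x] by simp
  then have "x \<in> eta i i i i n ` H i i n" using x by blast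
  then have "x \<in> {y \<in> H i i n. eta i i i i n y = 0}" using e unfolding exact_at_def by simp
  then show "x = 0" using ce_eta_id[OF ce _ x] by simp
qed

lemma class_dead:
  assumes up: "\<forall>k l. k \<in> J \<and> k \<le> l \<longrightarrow> l \<in> J"
    and comp: "\<forall>j k l x. j \<in> J \<and> j \<le> k \<and> k \<le> l \<and> x \<in> M j \<longrightarrow> f k l (f j k x) = f j l x"
    and zer: "\<forall>k l. k \<in> J \<and> k \<le> l \<longrightarrow> f k l z = z"
    and p: "p \<in> colim_carrier J M" and K: "K \<in> J" "fst p \<le> K" "f (fst p) K (snd p) = z"
  shows "colim_class J M f p = {q \<in> colim_carrier J M. \<exists>k\<in>J. fst q \<le> k \<and> f (fst q) k (snd q) = z}"
proof (intro set_eqI iffI)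
  fix q assume "q \<in> colim_class J M f p"
  then obtain k where q: "q \<in> colim_carrier J M" and k: "k \<in> J" "fst p \<le> k" "fst q \<le> k"
    "f (fst p) k (snd p) = f (fst q) k (snd q)" unfolding colim_class_def by blast
  define l where "l = max k K"
  have l: "l \<in> J" "k \<le> l" "K \<le> l" using up k K unfolding l_def by (metis max.cobounded1 max.cobounded2)+
  have qc: "fst q \<in> J" "snd q \<in> M (fst q)" using q unfolding colim_carrier_def by auto
  have pc: "fst p \<in> J" "snd p \<in> M (fst p)" using p unfolding colim_carrier_def by auto
  have "f (fst q) l (snd q) = f k l (f (fst q) k (snd q))" using comp qc k l by metis
  also have "\<dots> = f k l (f (fst p) k (snd p))" using k by simp
  also have "\<dots> = f (fst p) l (snd p)" using comp pc k l by metis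
  also have "\<dots> = f K l (f (fst p) K (snd p))" using comp pc K l by metis
  also have "\<dots> = z" using K zer l by simp
  finally have fz: "f (fst q) l (snd q) = z" .
  have "fst q \<le> l" using k l by auto
  then show "q \<in> {q \<in> colim_carrier J M. \<exists>k\<in>J. fst q \<le> k \<and> f (fst q) k (snd q) = z}"
    using q l(1) fz by blast
next
  fix q assume "q \<in> {q \<in> colim_carrier J M. \<exists>k\<in>J. fst q \<le> k \<and> f (fst q) k (snd q) = z}"
  then obtain k where q: "q \<in> colim_carrier J M" and k: "k \<in> J" "fst q \<le> k" "f (fst q) k (snd q) = z"
    by blast
  define l where "l = max k K"
  have l: "l \<in> J" "k \<le> l" "K \<le> l" using up k K unfolding l_def by (metis max.cobounded1 max.cobounded2)+
  have qc: "fst q \<in> J" "snd q \<in> M (fst q)" using q unfolding colim_carrier_def by auto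
  have pc: "fst p \<in> J" "snd p \<in> M (fst p)" using p unfolding colim_carrier_def by auto
  have e1: "f (fst q) l (snd q) = z"
  proof -
    have "f (fst q) l (snd q) = f k l (f (fst q) k (snd q))" using comp qc k l by metis
    then show ?thesis using k zer l by simp
  qed
  have e2: "f (fst p) l (snd p) = z"
  proof -
    have "f (fst p) l (snd p) = f K l (f (fst p) K (snd p))" using comp pc K l by metis
    then show ?thesis using K zer l by simp
  qed
  have "fst p \<le> l" "fst q \<le> l" using K k l by auto
  then show "q \<in> colim_class J M f p" unfolding colim_class_def
    using q l(1) e1 e2 by blast
qed


lemma limH_mem: "x \<in> limH H eta j n \<Longrightarrow> i \<le> j \<Longrightarrow> x i \<in> H i j n"
  unfolding limH_def by blast

lemma limH_step: "x \<in> limH H eta j n \<Longrightarrow> i \<le> j \<Longrightarrow> x i = eta (i-1) j i j n (x (i-1))"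
  unfolding limH_def by blast

lemma limeta_comp:
  assumes ce: "CE_system sc H eta del" and x: "x \<in> limH H eta j n" and jk: "j \<le> k" and kl: "k \<le> l"
  shows "limeta eta k l n (limeta eta j k n x) = limeta eta j l n x"
proof (rule ext)
  fix i
  show "limeta eta k l n (limeta eta j k n x) i = limeta eta j l n x i"
  proof (cases "i \<le> l")
    case True
    have mem: "x (min i j) \<in> H (min i j) j n" using limH_mem[OF x] by simp
    have mm: "min (min i k) j = min i j" using jk by auto
    have e1: "limeta eta j k n x (min i k) = eta (min i j) j (min i k) k n (x (min i j))"
      unfolding limeta_def using mm by simp
    have "eta (min i k) k i l n (eta (min i j) j (min i k) k n (x (min i j))) = eta (min i j) j i l n (x (min i j))"
      by (rule ce_eta_comp[OF ce _ _ _ _ _ _ _ mem]) (use jk kl True in auto)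
    then show ?thesis unfolding limeta_def using True mm by simp
  next
    case False
    then show ?thesis unfolding limeta_def by simp
  qed
qed

lemma limeta_zero:
  assumes ce: "CE_system sc H eta del" and kl: "k \<le> l"
  shows "limeta eta k l n (\<lambda>_. 0) = (\<lambda>_. 0)"
proof (rule ext)
  fix i
  show "limeta eta k l n (\<lambda>_. 0) i = 0"
  proof (cases "i \<le> l")
    case True
    have "eta (min i k) k i l n 0 = 0" by (rule eta_0[OF ce]) (use kl True in auto)
    then show ?thesis unfolding limeta_def using True by simp
  qed (simp add: limeta_def)
qed

lemma zero_limH:
  assumes ce: "CE_system sc H eta del"
  shows "(\<lambda>_. 0) \<in> limH H eta j n"
proof -
  have "\<And>i. i \<le> j \<Longrightarrow> 0 \<in> H i j n \<and> 0 = eta (i - 1) j i j n 0"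
  proof
    fix i assume "i \<le> j"
    show "0 \<in> H i j n" by (rule zero_in[OF ce]) fact
    have "eta (i - 1) j i j n 0 = 0" by (rule eta_0[OF ce]) (use \<open>i \<le> j\<close> in auto)
    then show "0 = eta (i - 1) j i j n 0" by simp
  qed
  then show ?thesis unfolding limH_def by auto
qed

lemma Hclass_dead:
  assumes ce: "CE_system sc H eta del"
    and p: "p \<in> colim_carrier {i..} (\<lambda>j. H i j n)" and K: "fst p \<le> K" "eta i (fst p) i K n (snd p) = 0"
  shows "colimH_class H eta i n p = {q \<in> colim_carrier {i..} (\<lambda>j. H i j n). \<exists>k\<in>{i..}. fst q \<le> k \<and> eta i (fst q) i k n (snd q) = 0}"
  unfolding colimH_class_def
proof (rule class_dead)
  show "\<forall>k l. k \<in> {i..} \<and> k \<le> l \<longrightarrow> l \<in> {i..}" by auto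
  show "\<forall>j k l x. j \<in> {i..} \<and> j \<le> k \<and> k \<le> l \<and> x \<in> H i j n \<longrightarrow> eta i k i l n (eta i j i k n x) = eta i j i l n x"
  proof (intro allI impI)
    fix j k l x assume h: "j \<in> {i..} \<and> j \<le> k \<and> k \<le> l \<and> x \<in> H i j n"
    show "eta i k i l n (eta i j i k n x) = eta i j i l n x"
      by (rule ce_eta_comp[OF ce]) (use h in auto)
  qed
  show "\<forall>k l. k \<in> {i..} \<and> k \<le> l \<longrightarrow> eta i k i l n 0 = 0"
  proof (intro allI impI)
    fix k l assume h: "k \<in> {i..} \<and> k \<le> l"
    show "eta i k i l n 0 = 0" by (rule eta_0[OF ce]) (use h in auto)
  qed
  show "p \<in> colim_carrier {i..} (\<lambda>j. H i j n)" by (rule p)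
  show "K \<in> {i..}" using p K unfolding colim_carrier_def by auto
  show "fst p \<le> K" by (rule K)
  show "eta i (fst p) i K n (snd p) = 0" by (rule K)
qed

lemma Lclass_dead:
  assumes ce: "CE_system sc H eta del"
    and p: "p \<in> colim_carrier UNIV (\<lambda>j. limH H eta j n)" and K: "fst p \<le> K" "limeta eta (fst p) K n (snd p) = (\<lambda>_. 0)"
  shows "colim_class UNIV (\<lambda>j. limH H eta j n) (\<lambda>j k. limeta eta j k n) p =
     {q \<in> colim_carrier UNIV (\<lambda>j. limH H eta j n). \<exists>k\<in>UNIV. fst q \<le> k \<and> limeta eta (fst q) k n (snd q) = (\<lambda>_. 0)}"
proof (rule class_dead)
  show "\<forall>k l. k \<in> UNIV \<and> k \<le> l \<longrightarrow> l \<in> (UNIV::int set)" by auto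
  show "\<forall>j k l x. j \<in> UNIV \<and> j \<le> k \<and> k \<le> l \<and> x \<in> limH H eta j n \<longrightarrow>
      limeta eta k l n (limeta eta j k n x) = limeta eta j l n x"
  proof (intro allI impI)
    fix j k l x assume h: "j \<in> (UNIV::int set) \<and> j \<le> k \<and> k \<le> l \<and> x \<in> limH H eta j n"
    show "limeta eta k l n (limeta eta j k n x) = limeta eta j l n x"
      by (rule limeta_comp[OF ce]) (use h in auto)
  qed
  show "\<forall>k l. k \<in> UNIV \<and> k \<le> l \<longrightarrow> limeta eta k l n (\<lambda>_. 0) = (\<lambda>_. 0)"
  proof (intro allI impI)
    fix k l :: int assume h: "k \<in> UNIV \<and> k \<le> l"
    show "limeta eta k l n (\<lambda>_. 0) = (\<lambda>_. 0)" by (rule limeta_zero[OF ce]) (use h in auto)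
  qed
qed (use p K in auto)


lemma keystep:
  assumes ce: "CE_system sc H eta del"
    and hyp: "\<forall>r s n. 1 \<le> r \<and> s - r \<le> a \<and> b < s \<longrightarrow>
           (\<forall>X \<in> Er H del r s n. dr H eta del r s n X = Br H del r (s - r) (n - 1))"
    and i: "i \<le> a" "i \<le> N" "b \<le> N"
    and w: "w \<in> H N (N+1) m" "del i N (N+1) m w = 0"
  shows "del (i-1) N (N+1) m w = 0"
proof -
  define r where "r = N + 1 - i"
  define M where "M = N + r"
  have r1: "1 \<le> r" "N + 1 - r = i" "N + 1 - 1 = N" "N + 1 + r - 1 = M" "i + r - 1 = N" "N + 1 \<le> M"
    "m - 1 + 1 = m"
    using i unfolding r_def M_def by auto
  have Z: "Zr H del r (N+1) m = {x \<in> H N (N+1) m. del i N (N+1) m x = 0}"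
    unfolding Zr_def r1(2) r1(3) by simp
  have Bs: "Br H del r (N+1) m = del N (N+1) M (m+1) ` H (N+1) M (m+1)"
    unfolding Br_def r1(3) r1(4) by simp
  have Bt: "Br H del r i (m-1) = del (i-1) i N m ` H i N m"
    unfolding Br_def r1(5) r1(7) by simp
  define X where "X = coset_of (Br H del r (N+1) m) w"
  have wZ: "w \<in> Zr H del r (N+1) m" using Z w by simp
  have XE: "X \<in> Er H del r (N+1) m" unfolding Er_def X_def using wZ by blast
  have hd0: "1 \<le> r \<and> N + 1 - r \<le> a \<and> b < N + 1 \<longrightarrow> (\<forall>X\<in>Er H del r (N+1) m. dr H eta del r (N+1) m X = Br H del r (N + 1 - r) (m - 1))"
    using hyp by blast
  have hd: "dr H eta del r (N+1) m X = Br H del r i (m - 1)"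
  proof -
    have c: "1 \<le> r \<and> N + 1 - r \<le> a \<and> b < N + 1" using r1 i by simp
    have "dr H eta del r (N+1) m X = Br H del r (N+1-r) (m-1)" using hd0 c XE by blast
    then show ?thesis using r1(2) by simp
  qed
  have z1: "0 \<in> H (N+1) M (m+1)" using zero_in[OF ce] r1 by auto
  have B0: "0 \<in> Br H del r (N+1) m"
  proof -
    have "del N (N+1) M (m+1) 0 = 0" by (rule del_0[OF ce]) (use r1 in auto)
    then show ?thesis unfolding Bs using z1 by (metis image_eqI)
  qed
  have wX: "w \<in> X" unfolding X_def coset_of_def using B0 by (metis add.right_neutral image_eqI)
  define x' where "x' = (SOME x. x \<in> X \<and> x \<in> Zr H del r (N+1) m)"
  have x': "x' \<in> X \<and> x' \<in> Zr H del r (N+1) m" unfolding x'_def by (rule someI[of _ w]) (use wX wZ in auto)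
  then obtain \<beta> where \<beta>: "\<beta> \<in> Br H del r (N+1) m" "x' = w + \<beta>" unfolding X_def coset_of_def by auto
  obtain \<gamma> where \<gamma>: "\<gamma> \<in> H (N+1) M (m+1)" "\<beta> = del N (N+1) M (m+1) \<gamma>" using \<beta> Bs by auto
  have x'H: "x' \<in> H N (N+1) m" "del i N (N+1) m x' = 0" using x' Z by auto
  obtain y0 where y0: "y0 \<in> H i (N+1) m" "x' = eta i (N+1) N (N+1) m y0"
    using ex2a[OF ce, of i N "N+1" x' m] i x'H by auto
  define y where "y = (SOME y. y \<in> H i (N+1) m \<and> eta i (N+1) N (N+1) m y = x')"
  have y: "y \<in> H i (N+1) m \<and> eta i (N+1) N (N+1) m y = x'" unfolding y_def
    by (rule someI[of _ y0]) (use y0 in auto)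
  have dr_eq: "dr H eta del r (N+1) m X = coset_of (Br H del r i (m-1)) (del (i-1) i (N+1) m y)"
    unfolding dr_def r1(2) r1(3) x'_def[symmetric] y_def[symmetric] by simp
  define \<delta> where "\<delta> = del (i-1) i (N+1) m y"
  have zv: "0 \<in> H i N m" using zero_in[OF ce] i by auto
  have B'0: "0 \<in> Br H del r i (m-1)"
  proof -
    have "del (i-1) i N m 0 = 0" by (rule del_0[OF ce]) (use i in auto)
    then show ?thesis unfolding Bt using zv by (metis image_eqI)
  qed
  have "\<delta> \<in> coset_of (Br H del r i (m-1)) \<delta>" unfolding coset_of_def using B'0
    by (metis add.right_neutral image_eqI)
  then have "\<delta> \<in> Br H del r i (m-1)" using hd dr_eq \<delta>_def by simp
  then obtain v where v: "v \<in> H i N m" "\<delta> = del (i-1) i N m v" unfolding Bt by auto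
  define y' where "y' = y - eta i N i (N+1) m v"
  have ev: "eta i N i (N+1) m v \<in> H i (N+1) m" using eta_mem[OF ce _ _ _ _ v(1)] i by auto
  have y'H: "y' \<in> H i (N+1) m" unfolding y'_def
    using sub_diff[OF ce_sub[OF ce] _ ev] y i by auto
  have dv: "del (i-1) i N m v \<in> H (i-1) i (m-1)" using del_mem[OF ce _ _ v(1)] i by auto
  have nat1: "del (i-1) i (N+1) m (eta i N i (N+1) m v) = del (i-1) i N m v"
    using ce_nat[OF ce, of "i-1" i N "i-1" i "N+1" v m] v(1) i ce_eta_id[OF ce _ dv] by auto
  have dy': "del (i-1) i (N+1) m y' = 0"
    unfolding y'_def using del_diff[OF ce _ _ _ ev, of "i-1"] y i nat1 v \<delta>_def by auto
  obtain t where t: "t \<in> H (i-1) (N+1) m" "y' = eta (i-1) (N+1) i (N+1) m t"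
    using ex2a[OF ce, of "i-1" i "N+1" y' m] y'H dy' i by auto
  have e0: "eta i (N+1) N (N+1) m (eta i N i (N+1) m v) = 0"
  proof -
    have "eta i (N+1) N (N+1) m (eta i N i (N+1) m v) = eta i N N (N+1) m v"
      using ce_eta_comp[OF ce _ _ _ _ _ _ _ v(1)] i by auto
    also have "\<dots> = eta N N N (N+1) m (eta i N N N m v)"
      using ce_eta_comp[OF ce _ _ _ _ _ _ _ v(1), of N N N "N+1"] i by auto
    also have "eta i N N N m v = 0" using H_diag[OF ce] eta_mem[OF ce _ _ _ _ v(1), of N N] i by auto
    finally show ?thesis using eta_0[OF ce, of N N N "N+1" m] by simp
  qed
  have "eta i (N+1) N (N+1) m y' = x'"
    unfolding y'_def using eta_diff[OF ce _ _ _ _ _ ev, of N "N+1"] y i e0 by auto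
  then have x't: "x' = eta (i-1) (N+1) N (N+1) m t"
    using t ce_eta_comp[OF ce _ _ _ _ _ _ _ t(1), of i "N+1" N "N+1"] i by auto
  have dx': "del (i-1) N (N+1) m x' = 0" unfolding x't using ex2b[OF ce _ _ t(1), of N] i by auto
  have \<beta>H: "\<beta> \<in> H N (N+1) m" using del_mem[OF ce _ _ \<gamma>(1), of N] \<gamma>(2) r1 by auto
  have d\<beta>: "del (i-1) N (N+1) m \<beta> = 0"
  proof -
    have dbm: "del (i-1) N (N+1) m \<beta> \<in> H (i-1) N (m-1)" using del_mem[OF ce _ _ \<beta>H] i by auto
    have "eta (i-1) N (i-1) N (m-1) (del (i-1) N (N+1) m \<beta>) = del (i-1) N M m (eta N (N+1) N M m \<beta>)"
      using ce_nat[OF ce, of "i-1" N "N+1" "i-1" N M \<beta> m] \<beta>H i r1 by auto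
    also have "eta N (N+1) N M m \<beta> = 0" unfolding \<gamma>(2) using ex3b[OF ce _ _ \<gamma>(1), of N] r1 by auto
    finally show ?thesis using ce_eta_id[OF ce _ dbm] del_0[OF ce, of "i-1" N M m] i r1 by auto
  qed
  have "w = x' - \<beta>" using \<beta> by simp
  then show ?thesis using del_diff[OF ce _ _ x'H(1) \<beta>H, of "i-1"] dx' d\<beta> i by auto
qed


lemma uniform_death:
  assumes ce: "CE_system sc H eta del"
    and hyp: "\<forall>r s n. 1 \<le> r \<and> s - r \<le> a \<and> b < s \<longrightarrow>
           (\<forall>X \<in> Er H del r s n. dr H eta del r s n X = Br H del r (s - r) (n - 1))"
    and x: "x \<in> limH H eta j n"
    and die: "\<forall>i\<le>j. \<exists>k\<ge>j. eta i j i k n (x i) = 0"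
  shows "\<exists>L\<ge>j. \<forall>i\<le>j. eta i j i L n (x i) = 0"
proof -
  have xmem: "\<And>i. i \<le> j \<Longrightarrow> x i \<in> H i j n" using limH_mem[OF x] by simp
  have xstep: "\<And>i. i \<le> j \<Longrightarrow> x i = eta (i-1) j i j n (x (i-1))" by (rule limH_step[OF x])
  have mono: "\<And>i N N'. i \<le> j \<Longrightarrow> j \<le> N \<Longrightarrow> N \<le> N' \<Longrightarrow> eta i j i N n (x i) = 0 \<Longrightarrow> eta i j i N' n (x i) = 0"
  proof -
    fix i N N' assume h: "i \<le> j" "j \<le> N" "N \<le> N'" "eta i j i N n (x i) = 0"
    have "eta i j i N' n (x i) = eta i N i N' n (eta i j i N n (x i))"
      using ce_eta_comp[OF ce _ _ _ _ _ _ _ xmem[OF h(1)], of i N i N'] h by auto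
    then show "eta i j i N' n (x i) = 0" using h eta_0[OF ce, of i N i N' n] by auto
  qed
  have compat: "\<And>i i'. i \<le> i' \<Longrightarrow> i' \<le> j \<Longrightarrow> x i' = eta i j i' j n (x i)"
  proof -
    fix i i' :: int assume h: "i \<le> i'" "i' \<le> j"
    have "i' \<le> j \<longrightarrow> x i' = eta i j i' j n (x i)" using h(1)
    proof (induction i' rule: int_ge_induct)
      case base
      show ?case
      proof
        assume ij: "i \<le> j"
        show "x i = eta i j i j n (x i)" using ce_eta_id[OF ce ij xmem[OF ij]] by simp
      qed
    next
      case (step k)
      show ?case
      proof
        assume k1: "k + 1 \<le> j"
        have "x (k+1) = eta k j (k+1) j n (x k)" using xstep[OF k1] by simp
        also have "\<dots> = eta k j (k+1) j n (eta i j k j n (x i))" using step k1 by auto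
        also have "\<dots> = eta i j (k+1) j n (x i)"
          using ce_eta_comp[OF ce _ _ _ _ _ _ _ xmem, of i k j "k+1" j] step k1 by auto
        finally show "x (k + 1) = eta i j (k + 1) j n (x i)" .
      qed
    qed
    then show "x i' = eta i j i' j n (x i)" using h by simp
  qed
  have upward: "\<And>i i' N. i \<le> i' \<Longrightarrow> i' \<le> j \<Longrightarrow> j \<le> N \<Longrightarrow> eta i j i N n (x i) = 0 \<Longrightarrow> eta i' j i' N n (x i') = 0"
  proof -
    fix i i' N assume h: "i \<le> i'" "i' \<le> j" "j \<le> N" "eta i j i N n (x i) = 0"
    have xi: "x i \<in> H i j n" using xmem h by auto
    have "eta i' j i' N n (x i') = eta i' j i' N n (eta i j i' j n (x i))" using compat[OF h(1) h(2)] by simp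
    also have "\<dots> = eta i j i' N n (x i)" using ce_eta_comp[OF ce _ _ _ _ _ _ _ xi, of i' j i' N] h by auto
    also have "\<dots> = eta i N i' N n (eta i j i N n (x i))"
      using ce_eta_comp[OF ce _ _ _ _ _ _ _ xi, of i N i' N] h by auto
    finally show "eta i' j i' N n (x i') = 0" using h eta_0[OF ce, of i N i' N n] by auto
  qed
  have stepL: "\<And>i N. i \<le> a \<Longrightarrow> i \<le> j \<Longrightarrow> j \<le> N \<Longrightarrow> b \<le> N \<Longrightarrow> eta i j i N n (x i) = 0
     \<Longrightarrow> eta (i-1) j (i-1) (N+1) n (x (i-1)) = 0 \<Longrightarrow> eta (i-1) j (i-1) N n (x (i-1)) = 0"
  proof -
    fix i N assume h: "i \<le> a" "i \<le> j" "j \<le> N" "b \<le> N" "eta i j i N n (x i) = 0"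
      "eta (i-1) j (i-1) (N+1) n (x (i-1)) = 0"
    have xi: "x (i-1) \<in> H (i-1) j n" using xmem h by auto
    define u where "u = eta (i-1) j (i-1) N n (x (i-1))"
    have uH: "u \<in> H (i-1) N n" unfolding u_def using eta_mem[OF ce _ _ _ _ xi] h by auto
    have "eta (i-1) N (i-1) (N+1) n u = eta (i-1) j (i-1) (N+1) n (x (i-1))"
      unfolding u_def using ce_eta_comp[OF ce _ _ _ _ _ _ _ xi, of "i-1" N "i-1" "N+1"] h by auto
    then obtain w where w: "w \<in> H N (N+1) (n+1)" "u = del (i-1) N (N+1) (n+1) w"
      using ex3a[OF ce _ _ uH, of "N+1"] h by auto
    have "del i N (N+1) (n+1) w = eta (i-1) N i N n u"
      using ce_nat[OF ce, of "i-1" N "N+1" i N "N+1" w "n+1"] w h ce_eta_id[OF ce _ w(1)] by auto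
    also have "\<dots> = eta (i-1) j i N n (x (i-1))"
      unfolding u_def using ce_eta_comp[OF ce _ _ _ _ _ _ _ xi, of "i-1" N i N] h by auto
    also have "\<dots> = eta i j i N n (eta (i-1) j i j n (x (i-1)))"
      using ce_eta_comp[OF ce _ _ _ _ _ _ _ xi, of i j i N] h by auto
    also have "\<dots> = eta i j i N n (x i)" using xstep[OF h(2)] by simp
    finally have "del i N (N+1) (n+1) w = 0" using h by simp
    then have "del (i-1) N (N+1) (n+1) w = 0" using keystep[OF ce hyp h(1) _ h(4) w(1)] h by auto
    then show "eta (i-1) j (i-1) N n (x (i-1)) = 0" using w u_def by simp
  qed
  define i0 where "i0 = min a j"
  have i0j: "i0 \<le> j" using i0_def by simp
  obtain K where K: "K \<ge> j" "eta i0 j i0 K n (x i0) = 0" using die i0j by blast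
  define L where "L = max K (max b j)"
  have L: "L \<ge> j" "L \<ge> b" "L \<ge> K" unfolding L_def by auto
  have d0: "eta i0 j i0 L n (x i0) = 0" using mono[OF _ K(1) L(3) K(2)] i0_def by auto
  have low: "\<And>i. i \<le> i0 \<Longrightarrow> eta i j i L n (x i) = 0"
  proof -
    fix i assume "i \<le> i0"
    then show "eta i j i L n (x i) = 0"
    proof (induction i rule: int_le_induct)
      case base show ?case by (rule d0)
    next
      case (step i)
      have ij: "i \<le> j" "i \<le> a" using step i0_def by auto
      obtain M where M: "M \<ge> j" "eta (i-1) j (i-1) M n (x (i-1)) = 0" using die[rule_format, of "i-1"] ij by auto
      have ind: "\<And>d::nat. eta (i-1) j (i-1) (L + int d) n (x (i-1)) = 0 \<Longrightarrow> eta (i-1) j (i-1) L n (x (i-1)) = 0"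
      proof -
        fix d :: nat
        show "eta (i-1) j (i-1) (L + int d) n (x (i-1)) = 0 \<Longrightarrow> eta (i-1) j (i-1) L n (x (i-1)) = 0"
        proof (induction d)
          case 0 then show ?case by simp
        next
          case (Suc d)
          have a1: "eta i j i (L + int d) n (x i) = 0" using mono[OF ij(1) L(1) _ step.IH] by simp
          have eqd: "L + int (Suc d) = L + int d + 1" by simp
          have a2: "eta (i-1) j (i-1) (L + int d + 1) n (x (i-1)) = 0" using Suc.prems[unfolded eqd] .
          have "eta (i-1) j (i-1) (L + int d) n (x (i-1)) = 0"
            by (rule stepL[OF ij(2) ij(1) _ _ a1 a2]) (use L in auto)
          then show ?case by (rule Suc.IH)
        qed
      qed
      have "eta (i-1) j (i-1) (L + int (nat (max M L - L))) n (x (i-1)) = 0"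
        by (rule mono[OF _ M(1) _ M(2)]) (use ij in auto)
      then show ?case by (rule ind)
    qed
  qed
  have "\<forall>i\<le>j. eta i j i L n (x i) = 0"
  proof (intro allI impI)
    fix i assume ij: "i \<le> j"
    show "eta i j i L n (x i) = 0"
    proof (cases "i \<le> i0")
      case True then show ?thesis by (rule low)
    next
      case False
      then show ?thesis using upward[of i0 i L] d0 ij L by auto
    qed
  qed
  then show ?thesis using L by auto
qed


lemma kappa_dead:
  assumes ce: "CE_system sc H eta del"
    and p: "p \<in> colim_carrier UNIV (\<lambda>j. limH H eta j n)" and k: "fst p \<le> k" "limeta eta (fst p) k n (snd p) = (\<lambda>_. 0)"
  shows "colimH_class H eta i n (max i (fst p), eta (min i (fst p)) (fst p) i (max i (fst p)) n (snd p (min i (fst p))))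
       = colimH_class H eta i n (i, 0)"
proof -
  define j where "j = fst p"
  define x where "x = snd p"
  have x: "x \<in> limH H eta j n" using p unfolding colim_carrier_def j_def x_def by auto
  have xm: "x (min i j) \<in> H (min i j) j n" using limH_mem[OF x] by simp
  define S where "S = {q \<in> colim_carrier {i..} (\<lambda>j. H i j n). \<exists>k\<in>{i..}. fst q \<le> k \<and> eta i (fst q) i k n (snd q) = 0}"
  have c0: "colimH_class H eta i n (i, 0) = S" unfolding S_def
    by (rule Hclass_dead[OF ce]) (use zero_in[OF ce] eta_0[OF ce] in \<open>auto simp: colim_carrier_def\<close>)
  define z where "z = eta (min i j) j i (max i j) n (x (min i j))"
  define K where "K = max k (max i j)"
  have zH: "z \<in> H i (max i j) n" unfolding z_def using eta_mem[OF ce _ _ _ _ xm] by auto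
  have "eta i (max i j) i K n z = eta (min i j) j i K n (x (min i j))"
    unfolding z_def using ce_eta_comp[OF ce _ _ _ _ _ _ _ xm, of i "max i j" i K] K_def by auto
  also have "\<dots> = limeta eta j K n x i"
  proof -
    have iK: "i \<le> K" unfolding K_def by simp
    then show ?thesis unfolding limeta_def by simp
  qed
  also have "\<dots> = limeta eta k K n (limeta eta j k n x) i"
    using limeta_comp[OF ce x, of k K] k j_def K_def by auto
  also have "\<dots> = 0" using k limeta_zero[OF ce, of k K n] j_def x_def K_def by auto
  finally have "colimH_class H eta i n (max i j, z) = S" unfolding S_def
    by (intro Hclass_dead[OF ce]) (use zH K_def in \<open>auto simp: colim_carrier_def\<close>)
  then show ?thesis using c0 unfolding z_def j_def x_def by simp
qed

theorem proposition5p3: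
  fixes sc :: "'r::ring_1 \<Rightarrow> 'a::ab_group_add \<Rightarrow> 'a"
    and H :: "int \<Rightarrow> int \<Rightarrow> int \<Rightarrow> 'a set"
    and eta :: "int \<Rightarrow> int \<Rightarrow> int \<Rightarrow> int \<Rightarrow> int \<Rightarrow> 'a \<Rightarrow> 'a"
    and del :: "int \<Rightarrow> int \<Rightarrow> int \<Rightarrow> int \<Rightarrow> 'a \<Rightarrow> 'a"
    and a b :: int
  assumes "CE_system sc H eta del"
    and "\<forall>r s n. 1 \<le> r \<and> s - r \<le> a \<and> b < s \<longrightarrow>
           (\<forall>X \<in> Er H del r s n. dr H eta del r s n X = Br H del r (s - r) (n - 1))"
  shows "\<forall>n. ker_kappa H eta n = {zero_source H eta n}"
proof (intro allI)
  fix n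
  note ce = assms(1) and hyp = assms(2)
  let ?Mc = "colim_carrier UNIV (\<lambda>j. limH H eta j n)"
  let ?f = "\<lambda>j k. limeta eta j k n"
  have z0: "(0::int, \<lambda>_. 0) \<in> ?Mc" using zero_limH[OF ce] by (simp add: colim_carrier_def)
  have ZS: "zero_source H eta n = {q \<in> ?Mc. \<exists>k\<in>UNIV. fst q \<le> k \<and> limeta eta (fst q) k n (snd q) = (\<lambda>_. 0)}"
    unfolding zero_source_def by (rule Lclass_dead[OF ce z0, of 0]) (use limeta_zero[OF ce] in auto)
  have kap: "\<And>C. kappa H eta n C = (\<lambda>i. colimH_class H eta i n (max i (fst (SOME p. p \<in> C)),
      eta (min i (fst (SOME p. p \<in> C))) (fst (SOME p. p \<in> C)) i (max i (fst (SOME p. p \<in> C))) n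
        (snd (SOME p. p \<in> C) (min i (fst (SOME p. p \<in> C))))))"
    unfolding kappa_def Let_def by simp
  have refl: "\<And>q. q \<in> ?Mc \<Longrightarrow> q \<in> colim_class UNIV (\<lambda>j. limH H eta j n) ?f q"
    unfolding colim_class_def by auto
  show "ker_kappa H eta n = {zero_source H eta n}"
  proof (intro set_eqI iffI)
    fix C assume "C \<in> {zero_source H eta n}"
    then have C: "C = zero_source H eta n" by simp
    have Cin: "C \<in> colimLim H eta n" unfolding C colimLim_def colim_def zero_source_def using z0 by blast
    have "(0::int, \<lambda>_. 0) \<in> C" unfolding C ZS using z0 limeta_zero[OF ce, of 0 0 n] by auto
    then have pC: "(SOME p. p \<in> C) \<in> C" by (rule someI)
    then obtain k where p: "(SOME p. p \<in> C) \<in> ?Mc" "fst (SOME p. p \<in> C) \<le> k"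
      "limeta eta (fst (SOME p. p \<in> C)) k n (snd (SOME p. p \<in> C)) = (\<lambda>_. 0)"
      unfolding C ZS by auto
    have "kappa H eta n C = zero_target H eta n"
      unfolding kap zero_target_def using kappa_dead[OF ce p] by simp
    then show "C \<in> ker_kappa H eta n" unfolding ker_kappa_def using Cin by simp
  next
    fix C assume "C \<in> ker_kappa H eta n"
    then have Cin: "C \<in> colimLim H eta n" and Ck: "kappa H eta n C = zero_target H eta n"
      unfolding ker_kappa_def by auto
    obtain p0 where p0: "p0 \<in> ?Mc" "C = colim_class UNIV (\<lambda>j. limH H eta j n) ?f p0"
      using Cin unfolding colimLim_def colim_def by auto
    have "p0 \<in> C" using p0 refl by simp
    then have pC: "(SOME p. p \<in> C) \<in> C" by (rule someI)
    define j where "j = fst (SOME p. p \<in> C)"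
    define x where "x = snd (SOME p. p \<in> C)"
    obtain k1 where k1: "fst p0 \<le> k1" "j \<le> k1" "limeta eta (fst p0) k1 n (snd p0) = limeta eta j k1 n x"
      and pM: "(SOME p. p \<in> C) \<in> ?Mc"
      using pC unfolding p0(2) colim_class_def j_def x_def by auto
    have x: "x \<in> limH H eta j n" using pM unfolding colim_carrier_def j_def x_def by auto
    have xm: "\<And>i. i \<le> j \<Longrightarrow> x i \<in> H i j n" using limH_mem[OF x] by simp
    have die: "\<forall>i\<le>j. \<exists>k\<ge>j. eta i j i k n (x i) = 0"
    proof (intro allI impI)
      fix i assume ij: "i \<le> j"
      have "colimH_class H eta i n (j, x i) = colimH_class H eta i n (i, 0)"
        using fun_cong[OF Ck, of i] ij ce_eta_id[OF ce ij xm[OF ij]]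
        unfolding kap zero_target_def j_def[symmetric] x_def[symmetric] by (simp add: max_def min_def)
      moreover have "(j, x i) \<in> colimH_class H eta i n (j, x i)"
        unfolding colimH_class_def colim_class_def colim_carrier_def using ij xm[OF ij] by auto
      moreover have "colimH_class H eta i n (i, 0) = {q \<in> colim_carrier {i..} (\<lambda>j. H i j n). \<exists>k\<in>{i..}. fst q \<le> k \<and> eta i (fst q) i k n (snd q) = 0}"
        by (rule Hclass_dead[OF ce]) (use zero_in[OF ce] eta_0[OF ce] in \<open>auto simp: colim_carrier_def\<close>)
      ultimately show "\<exists>k\<ge>j. eta i j i k n (x i) = 0" by auto
    qed
    obtain L where L: "L \<ge> j" "\<forall>i\<le>j. eta i j i L n (x i) = 0"
      using uniform_death[OF ce hyp x die] by auto
    have xL: "limeta eta j L n x = (\<lambda>_. 0)"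
    proof (rule ext)
      fix i
      show "limeta eta j L n x i = 0"
      proof (cases "i \<le> j")
        case True then show ?thesis unfolding limeta_def using L by auto
      next
        case False
        have "x j = 0" using H_diag[OF ce xm[of j]] by simp
        then show ?thesis unfolding limeta_def using False eta_0[OF ce, of j j i L n] by auto
      qed
    qed
    define K' where "K' = max k1 L"
    have "limeta eta (fst p0) K' n (snd p0) = limeta eta k1 K' n (limeta eta (fst p0) k1 n (snd p0))"
      using limeta_comp[OF ce, of "snd p0" "fst p0" n k1 K'] p0(1) k1 K'_def
      by (auto simp: colim_carrier_def)
    also have "\<dots> = limeta eta j K' n x" using k1 limeta_comp[OF ce x, of k1 K'] K'_def by auto
    also have "\<dots> = limeta eta L K' n (limeta eta j L n x)" using limeta_comp[OF ce x, of L K'] L K'_def by auto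
    also have "\<dots> = (\<lambda>_. 0)" using xL limeta_zero[OF ce, of L K' n] K'_def by auto
    finally have "C = zero_source H eta n" unfolding p0(2) ZS
      by (intro Lclass_dead[OF ce p0(1)]) (use k1 K'_def in auto)
    then show "C \<in> {zero_source H eta n}" by simp
  qed
qed

end
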